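(* Let $(q_l)_{l\ge1}$ be positive numbers with $q_1=1$ and $0<R:=\lim_{l\to\infty}q_l/q_{l+1}<\infty$, and assume (NEQ): $\tilde f(1)<1$, or $\tilde f(1)=1$ and $\tilde g(1)=\infty$. Let $\rho^*>0$ and let $(z^{(m)})_{m\ge1}\subset X_{0+}$ with $\rho(z^{(m)})=\rho^*$ for all $m$ be a minimizing sequence for $\inf\{\tilde A(z): z\in X_{0+},\ \rho(z)=\rho^*\}$. Then $z^{(m)}\to0$ weak-$*$ in $X$ as $m\to\infty$, i.e. $z^{(m)}_l\to0$ for every $l\in\mathbb{N}$.
   Context: $X=\{z=(z_l)_{l\ge1}:\sum_l l|z_l|<\infty\}$ with norm $\|z\|_X=\sum_l l|z_l|$, $X_{0+}$ its nonnegative elements, $\rho(z)=\sum_l lz_l$, $N(z)=\sum_l z_l$. $X$ is the dual of $\{z: z_l/l\to0\}$; a norm-bounded sequence in $X$ converges weak-$*$ iff it converges componentwise. $\tilde q_l=q_lR^l$, $\tilde f(\mu)=\sum_{l\ge1}\tilde q_l\mu^l$, $\tilde g(\mu)=\sum_{l\ge1}l\tilde q_l\mu^l$, $\tilde f(1)=\sum_l\tilde q_l$, $\tilde g(1)=\sum_l l\tilde q_l$ (values in $(0,\infty]$). For $z\in X_{0+}\setminus\{0\}$, $\tilde A(z)=\sum_l z_l\ln\big(z_l/(\tilde q_lN(z))\big)$ with $0\ln0=0$, and $\tilde A(0)=0$. *)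

theory Defs
  imports "HOL-Analysis.Analysis"
begin

text \<open>Sequences indexed by l >= 1 are represented as functions nat => real;
  the value at index 0 is irrelevant (for elements of X it is required to be 0).\<close>

definition qt :: "(nat \<Rightarrow> real) \<Rightarrow> real \<Rightarrow> nat \<Rightarrow> real" where
  "qt q R l = q l * R ^ l"

text \<open>f~(1) and g~(1) with values in (0, infinity], as extended nonnegative reals.\<close>
definition ft1 :: "(nat \<Rightarrow> real) \<Rightarrow> real \<Rightarrow> ennreal" where
  "ft1 q R = (\<Sum>l. ennreal (qt q R (Suc l)))"

definition gt1 :: "(nat \<Rightarrow> real) \<Rightarrow> real \<Rightarrow> ennreal" where
  "gt1 q R = (\<Sum>l. ennreal (real (Suc l) * qt q R (Suc l)))"

definition X0plus :: "(nat \<Rightarrow> real) set" where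
  "X0plus = {z. z 0 = 0 \<and> (\<forall>l. 0 \<le> z l) \<and> summable (\<lambda>l. real l * z l)}"

definition rho :: "(nat \<Rightarrow> real) \<Rightarrow> real" where
  "rho z = (\<Sum>l. real l * z l)"

definition Nz :: "(nat \<Rightarrow> real) \<Rightarrow> real" where
  "Nz z = (\<Sum>l. z (Suc l))"

text \<open>A~(z) = sum_{l>=1} z_l ln(z_l / (q~_l N(z))), with 0 ln 0 = 0 (automatic, since 0 * _ = 0),
  and A~(0) = 0.\<close>
definition At :: "(nat \<Rightarrow> real) \<Rightarrow> real \<Rightarrow> (nat \<Rightarrow> real) \<Rightarrow> real" where
  "At q R z = (if (\<forall>l\<ge>1. z l = 0) then 0
     else (\<Sum>l. z (Suc l) * ln (z (Suc l) / (qt q R (Suc l) * Nz z))))"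

end

theory Submission
  imports Defs
begin

lemma qt_pos: assumes "\<forall>l\<ge>1. q l > 0" "0 < R" "l \<ge> 1" shows "qt q R l > 0"
  using assms by (simp add: qt_def)

lemma qt_ratio:
  assumes qpos: "\<forall>l\<ge>1. q l > 0" and Rlim: "(\<lambda>l. q l / q (Suc l)) \<longlonglongrightarrow> R" and Rpos: "0 < R"
  shows "(\<lambda>l. qt q R (Suc l) / qt q R l) \<longlonglongrightarrow> 1"
proof -
  have "(\<lambda>l. R * inverse (q l / q (Suc l))) \<longlonglongrightarrow> R * inverse R"
    by (intro tendsto_intros Rlim) (use Rpos in auto)
  moreover have "eventually (\<lambda>l. R * inverse (q l / q (Suc l)) = qt q R (Suc l) / qt q R l) sequentially"
    using eventually_ge_at_top[of 1]
  proof eventually_elim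
    case (elim l)
    then have "q l > 0" "q (Suc l) > 0" using qpos by auto
    then show ?case using Rpos by (simp add: qt_def field_simps)
  qed
  ultimately show ?thesis using Rpos by (simp add: tendsto_cong)
qed

lemma qt_low:
  assumes qpos: "\<forall>l\<ge>1. q l > 0" and Rlim: "(\<lambda>l. q l / q (Suc l)) \<longlonglongrightarrow> R" and Rpos: "0 < R"
    and d: "d > 0"
  shows "\<exists>c>0. \<forall>l\<ge>1. qt q R l \<ge> c * exp (- d * real l)"
proof -
  have "eventually (\<lambda>l. exp (-d) < qt q R (Suc l) / qt q R l) sequentially"
    using qt_ratio[OF qpos Rlim Rpos] by (rule order_tendstoD) (use d in auto)
  then obtain L0 where L0: "\<And>l. l \<ge> L0 \<Longrightarrow> exp (-d) < qt q R (Suc l) / qt q R l"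
    by (auto simp: eventually_sequentially)
  define L where "L = max L0 1"
  define g where "g l = qt q R l * exp (d * real l)" for l
  have gpos: "g l > 0" if "l \<ge> 1" for l using qt_pos[OF qpos Rpos that] by (simp add: g_def)
  have gmono: "g L \<le> g l" if "L \<le> l" for l
    using that
  proof (induction rule: dec_induct)
    case base then show ?case by simp
  next
    case (step n)
    have n1: "n \<ge> 1" "n \<ge> L0" using step L_def by auto
    have p: "qt q R n > 0" using qt_pos[OF qpos Rpos n1(1)] .
    have "exp (-d) * qt q R n \<le> qt q R (Suc n)" using L0[OF n1(2)] p by (simp add: field_simps)
    then have "exp (-d) * qt q R n * exp (d * real (Suc n)) \<le> qt q R (Suc n) * exp (d * real (Suc n))"
      by (intro mult_right_mono) auto
    moreover have "exp (-d) * qt q R n * exp (d * real (Suc n)) = g n"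
    proof -
      have e: "exp (-d) * exp (d * real (Suc n)) = exp (d * real n)"
        by (subst exp_add[symmetric]) (simp add: algebra_simps)
      have "exp (-d) * qt q R n * exp (d * real (Suc n)) = qt q R n * (exp (-d) * exp (d * real (Suc n)))"
        by (simp add: mult_ac)
      then show ?thesis using e by (simp add: g_def)
    qed
    ultimately have "g n \<le> g (Suc n)" unfolding g_def by linarith
    then show ?case using step.IH by linarith
  qed
  define c where "c = Min (g ` {1..L})"
  have L1: "L \<ge> 1" by (simp add: L_def)
  have cpos: "c > 0" unfolding c_def using L1 gpos by (subst Min_gr_iff) auto
  have cle: "c \<le> g l" if "l \<ge> 1" for l
  proof (cases "l \<le> L")
    case True then show ?thesis unfolding c_def using that by (intro Min_le) auto
  next
    case False
    have "c \<le> g L" unfolding c_def using L1 by (intro Min_le) auto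
    then show ?thesis using gmono[of l] False by simp
  qed
  show ?thesis
  proof (intro exI[of _ c] conjI allI impI cpos)
    fix l :: nat assume "l \<ge> 1"
    then have "c \<le> qt q R l * exp (d * real l)" using cle g_def by simp
    then have "c * exp (- d * real l) \<le> qt q R l * exp (d * real l) * exp (- d * real l)"
      by (intro mult_right_mono) auto
    then show "c * exp (- d * real l) \<le> qt q R l" by (simp add: mult.assoc flip: exp_add)
  qed
qed

lemma F_summable:
  assumes qpos: "\<forall>l\<ge>1. q l > 0" and Rlim: "(\<lambda>l. q l / q (Suc l)) \<longlonglongrightarrow> R" and Rpos: "0 < R"
    and lam: "t > 0"
  shows "summable (\<lambda>l. qt q R (Suc l) * exp (- t * real (Suc l)))"
proof -
  have "eventually (\<lambda>l. qt q R (Suc (Suc l)) / qt q R (Suc l) < exp (t/2)) sequentially"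
    using qt_ratio[OF qpos Rlim Rpos] by (subst eventually_sequentially_Suc) (rule order_tendstoD, use lam in auto)
  then obtain L where L: "\<And>l. l \<ge> L \<Longrightarrow> qt q R (Suc (Suc l)) / qt q R (Suc l) < exp (t/2)"
    by (auto simp: eventually_sequentially)
  show ?thesis
  proof (rule summable_ratio_test[of "exp (-t/2)" L])
    show "exp (-t/2) < 1" using lam by simp
  next
    fix n assume "n \<ge> L"
    have p: "qt q R (Suc n) > 0" "qt q R (Suc (Suc n)) > 0" using qt_pos[OF qpos Rpos] by auto
    have "qt q R (Suc (Suc n)) \<le> exp (t/2) * qt q R (Suc n)" using L[OF \<open>n \<ge> L\<close>] p
      by (simp add: field_simps)
    then have "qt q R (Suc (Suc n)) * exp (- t * real (Suc (Suc n))) \<le> exp (t/2) * qt q R (Suc n) * exp (- t * real (Suc (Suc n)))"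
      by (intro mult_right_mono) auto
    also have "\<dots> = exp (-t/2) * (qt q R (Suc n) * exp (- t * real (Suc n)))"
      by (simp add: mult_ac flip: exp_add) (simp add: algebra_simps)
    finally show "norm (qt q R (Suc (Suc n)) * exp (- t * real (Suc (Suc n)))) \<le> exp (-t/2) * norm (qt q R (Suc n) * exp (- t * real (Suc n)))"
      using p by simp
  qed
qed


lemma exp_half: fixes x :: real assumes "0 \<le> x" "x \<le> 1" shows "x / 2 \<le> 1 - exp (- x)"
proof -
  have "1 + x \<le> exp x" using assms(1) by (rule exp_ge_add_one_self_aux)
  then have "exp (-x) \<le> 1 / (1 + x)" using assms by (simp add: exp_minus field_simps)
  also have "\<dots> \<le> 1 - x / 2" using assms mult_left_le[of x x] by (simp add: field_simps algebra_simps)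
  finally show ?thesis by simp
qed

lemma F_gap:
  assumes qpos: "\<forall>l\<ge>1. q l > 0" and Rlim: "(\<lambda>l. q l / q (Suc l)) \<longlonglongrightarrow> R" and Rpos: "0 < R"
    and NEQ: "ft1 q R < 1 \<or> (ft1 q R = 1 \<and> gt1 q R = \<infinity>)"
    and M: "M > 0"
  shows "\<exists>t>0. M * t \<le> 1 - (\<Sum>l. qt q R (Suc l) * exp (- t * real (Suc l)))"
proof -
  have nn: "\<And>l. 0 \<le> qt q R (Suc l)" using qt_pos[OF qpos Rpos] less_imp_le by auto
  have "ft1 q R \<le> 1" using NEQ by auto
  then have "ft1 q R \<noteq> top" by (auto simp: top_unique)
  then have sm: "summable (\<lambda>l. qt q R (Suc l))" unfolding ft1_def by (rule summable_suminf_not_top[OF nn])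
  define s where "s = (\<Sum>l. qt q R (Suc l))"
  have fts: "ft1 q R = ennreal s" unfolding ft1_def s_def by (rule suminf_ennreal2[OF nn sm])
  have s0: "s \<ge> 0" unfolding s_def by (rule suminf_nonneg[OF sm nn])
  have Fs: "summable (\<lambda>l. qt q R (Suc l) * exp (- t * real (Suc l)))"
    and Fle: "(\<Sum>l. qt q R (Suc l) * exp (- t * real (Suc l))) \<le> s" if "t > 0" for t
  proof -
    show S: "summable (\<lambda>l. qt q R (Suc l) * exp (- t * real (Suc l)))" by (rule F_summable[OF qpos Rlim Rpos that])
    show "(\<Sum>l. qt q R (Suc l) * exp (- t * real (Suc l))) \<le> s" unfolding s_def
      using that nn by (intro suminf_le[OF _ S sm]) (simp add: mult_left_le)
  qed
  show ?thesis
  proof (cases "ft1 q R < 1")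
    case True
    then have "s < 1" using fts s0 by (simp add: ennreal_less_iff)
    define t where "t = (1 - s) / M"
    have t: "t > 0" "M * t = 1 - s" using \<open>s < 1\<close> M by (auto simp: t_def)
    show ?thesis using t Fle[OF t(1)] by (intro exI[of _ t]) auto
  next
    case False
    then have s1: "s = 1" and gt: "gt1 q R = \<infinity>" using NEQ fts s0 by auto
    have "\<exists>K. 2 * M \<le> (\<Sum>l<K. real (Suc l) * qt q R (Suc l))"
    proof (rule ccontr)
      assume "\<not> ?thesis"
      then have "\<And>K. (\<Sum>l<K. ennreal (real (Suc l) * qt q R (Suc l))) \<le> ennreal (2 * M)"
        using nn by (subst sum_ennreal) (auto intro!: ennreal_leI simp: not_le less_imp_le)
      then have "gt1 q R \<le> ennreal (2 * M)" unfolding gt1_def by (intro suminf_le_const) auto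
      then show False using gt ennreal_less_top[of "2*M"] by (simp add: top_unique)
    qed
    then obtain K where K: "2 * M \<le> (\<Sum>l<K. real (Suc l) * qt q R (Suc l))" by blast
    have "K \<noteq> 0" using K M by (cases K) auto
    define t where "t = 1 / real K"
    have t: "t > 0" using \<open>K \<noteq> 0\<close> by (simp add: t_def)
    have D: "summable (\<lambda>l. qt q R (Suc l) - qt q R (Suc l) * exp (- t * real (Suc l)))"
      using sm Fs[OF t] by (rule summable_diff)
    have "1 - (\<Sum>l. qt q R (Suc l) * exp (- t * real (Suc l))) = (\<Sum>l. qt q R (Suc l) - qt q R (Suc l) * exp (- t * real (Suc l)))"
      using suminf_diff[OF sm Fs[OF t]] s1 s_def by simp
    also have "\<dots> \<ge> (\<Sum>l<K. qt q R (Suc l) - qt q R (Suc l) * exp (- t * real (Suc l)))"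
      using D nn by (intro sum_le_suminf) (auto intro!: mult_left_le mult_nonneg_nonneg less_imp_le[OF t])
    also have "(\<Sum>l<K. qt q R (Suc l) - qt q R (Suc l) * exp (- t * real (Suc l))) \<ge> (\<Sum>l<K. t / 2 * (real (Suc l) * qt q R (Suc l)))"
    proof (intro sum_mono)
      fix l assume "l \<in> {..<K}"
      then have x: "0 \<le> t * real (Suc l)" "t * real (Suc l) \<le> 1" using t \<open>K \<noteq> 0\<close> by (auto simp: t_def field_simps)
      have "t * real (Suc l) / 2 * qt q R (Suc l) \<le> (1 - exp (- (t * real (Suc l)))) * qt q R (Suc l)"
        by (intro mult_right_mono exp_half x nn)
      then show "t / 2 * (real (Suc l) * qt q R (Suc l)) \<le> qt q R (Suc l) - qt q R (Suc l) * exp (- t * real (Suc l))"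
        by (simp add: algebra_simps add_divide_distrib)
    qed
    finally have "t / 2 * (\<Sum>l<K. real (Suc l) * qt q R (Suc l)) \<le> 1 - (\<Sum>l. qt q R (Suc l) * exp (- t * real (Suc l)))"
      by (simp add: sum_distrib_left)
    moreover have "M * t \<le> t / 2 * (\<Sum>l<K. real (Suc l) * qt q R (Suc l))" using mult_right_mono[OF K, of t] t by (simp add: field_simps)
    ultimately have "M * t \<le> 1 - (\<Sum>l. qt q R (Suc l) * exp (- t * real (Suc l)))" by linarith
    then show ?thesis using t by blast
  qed
qed


lemma xlnx: fixes z y :: real assumes "0 \<le> z" "0 < y" shows "z - y \<le> z * ln (z / y)"
proof (cases "z = 0")
  case True then show ?thesis using assms by simp
next
  case False
  then have z: "z > 0" using assms by simp
  have "ln (y / z) \<le> y / z - 1" using z assms by (intro ln_le_minus_one) simp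
  moreover have "ln (z / y) = - ln (y / z)" using z assms by (simp add: ln_div)
  ultimately have "1 - y / z \<le> ln (z / y)" by simp
  then have "z * (1 - y / z) \<le> z * ln (z / y)" using z by (intro mult_left_mono) auto
  then show ?thesis using z by (simp add: algebra_simps)
qed

lemma term_le_suminf: fixes f :: "nat \<Rightarrow> real"
  assumes "summable f" "\<And>n. 0 \<le> f n" shows "f i \<le> suminf f"
  using sum_le_suminf[OF assms(1), of "{i}"] assms(2) by simp

lemma X0_facts:
  assumes z: "z \<in> X0plus"
  shows "\<And>l. 0 \<le> z l" "z 0 = 0" "summable (\<lambda>l. real (Suc l) * z (Suc l))" "summable (\<lambda>l. z (Suc l))"
    "rho z = (\<Sum>l. real (Suc l) * z (Suc l))" "\<And>l. z (Suc l) \<le> Nz z" "Nz z \<ge> 0"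
proof -
  show nn: "\<And>l. 0 \<le> z l" and z0: "z 0 = 0" using z by (auto simp: X0plus_def)
  have sm: "summable (\<lambda>l. real l * z l)" using z by (auto simp: X0plus_def)
  show s1: "summable (\<lambda>l. real (Suc l) * z (Suc l))" using sm by (subst summable_Suc_iff[where f="\<lambda>l. real l * z l"])
  show s0: "summable (\<lambda>l. z (Suc l))"
  proof (rule summable_comparison_test'[OF s1, of 0])
    fix n :: nat
    show "norm (z (Suc n)) \<le> real (Suc n) * z (Suc n)" using nn[of "Suc n"] by (simp add: algebra_simps)
  qed
  show "rho z = (\<Sum>l. real (Suc l) * z (Suc l))" unfolding rho_def using suminf_split_head[OF sm] z0 by simp
  show "\<And>l. z (Suc l) \<le> Nz z" unfolding Nz_def by (rule term_le_suminf[OF s0]) (simp add: nn)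
  show "Nz z \<ge> 0" unfolding Nz_def by (rule suminf_nonneg[OF s0]) (simp add: nn)
qed

lemma At_lower:
  assumes qpos: "\<forall>l\<ge>1. q l > 0" and Rlim: "(\<lambda>l. q l / q (Suc l)) \<longlonglongrightarrow> R" and Rpos: "0 < R"
    and z: "z \<in> X0plus" and nz: "\<not> (\<forall>l\<ge>1. z l = 0)" and t: "t > 0"
  shows "Nz z * (1 - (\<Sum>l. qt q R (Suc l) * exp (- t * real (Suc l)))) - t * rho z \<le> At q R z"
proof -
  note zf = X0_facts[OF z]
  define N where "N = Nz z"
  obtain l0 where l0: "l0 \<ge> 1" "z l0 \<noteq> 0" using nz by auto
  then obtain k where k: "l0 = Suc k" by (cases l0) auto
  have "0 < z (Suc k)" using l0 k zf(1)[of l0] by auto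
  then have Npos: "N > 0" using zf(6)[of k] by (simp add: N_def)
  define T where "T l = z (Suc l) * ln (z (Suc l) / (qt q R (Suc l) * N))" for l
  define G where "G l = z (Suc l) - N * (qt q R (Suc l) * exp (- t * real (Suc l))) - t * (real (Suc l) * z (Suc l))" for l
  obtain c where c: "c > 0" "\<And>l. l \<ge> 1 \<Longrightarrow> qt q R l \<ge> c * exp (- 1 * real l)"
    using qt_low[OF qpos Rlim Rpos, of 1] by auto
  define H where "H l = z (Suc l) * (N + \<bar>ln c\<bar> + real (Suc l) + \<bar>ln N\<bar>)" for l
  have qp: "\<And>l. qt q R (Suc l) > 0" using qt_pos[OF qpos Rpos] by auto
  have Fs: "summable (\<lambda>l. qt q R (Suc l) * exp (- t * real (Suc l)))" by (rule F_summable[OF qpos Rlim Rpos t])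
  have GT: "G l \<le> T l" for l
  proof (cases "z (Suc l) = 0")
    case True then show ?thesis using qp[of l] Npos by (simp add: G_def T_def)
  next
    case False
    then have zp: "z (Suc l) > 0" using zf(1)[of "Suc l"] by simp
    define y where "y = N * (qt q R (Suc l) * exp (- t * real (Suc l)))"
    have yp: "y > 0" using Npos qp[of l] by (simp add: y_def)
    have "z (Suc l) / (qt q R (Suc l) * N) = (z (Suc l) / y) * exp (- t * real (Suc l))"
      using Npos qp[of l] by (simp add: y_def field_simps)
    moreover have "ln ((z (Suc l) / y) * exp (- t * real (Suc l))) = ln (z (Suc l) / y) + (- t * real (Suc l))"
      using zp yp by (subst ln_mult) auto
    ultimately have eq: "ln (z (Suc l) / (qt q R (Suc l) * N)) = ln (z (Suc l) / y) - t * real (Suc l)"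
      by simp
    have "T l = z (Suc l) * ln (z (Suc l) / y) - t * (real (Suc l) * z (Suc l))"
      unfolding T_def eq by (simp add: right_diff_distrib)
    moreover have "z (Suc l) - y \<le> z (Suc l) * ln (z (Suc l) / y)" using zp yp by (intro xlnx) auto
    ultimately show ?thesis by (simp add: G_def y_def)
  qed
  have TH: "T l \<le> H l" for l
  proof (cases "z (Suc l) = 0")
    case True then show ?thesis by (simp add: T_def H_def)
  next
    case False
    then have zp: "z (Suc l) > 0" using zf(1)[of "Suc l"] by simp
    have "ln (z (Suc l) / (qt q R (Suc l) * N)) = ln (z (Suc l)) - ln (qt q R (Suc l)) - ln N"
      using zp qp[of l] Npos by (simp add: ln_div ln_mult)
    moreover have "ln (z (Suc l)) \<le> N" using ln_le_minus_one[OF zp] zf(6)[of l] by (simp add: N_def)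
    moreover have "- ln (qt q R (Suc l)) \<le> \<bar>ln c\<bar> + real (Suc l)"
    proof -
      have "c * exp (- 1 * real (Suc l)) \<le> qt q R (Suc l)" using c(2)[of "Suc l"] by simp
      then have "ln (c * exp (- 1 * real (Suc l))) \<le> ln (qt q R (Suc l))" using c(1) qp[of l] by (subst ln_le_cancel_iff) auto
      then show ?thesis using c(1) by (simp add: ln_mult)
    qed
    ultimately have "ln (z (Suc l) / (qt q R (Suc l) * N)) \<le> N + \<bar>ln c\<bar> + real (Suc l) + \<bar>ln N\<bar>" by linarith
    then show ?thesis unfolding T_def H_def using zp by (intro mult_left_mono) auto
  qed
  have Gs: "summable G" unfolding G_def
    by (intro summable_diff summable_mult zf(4) zf(3) Fs)
  have Hs: "summable H" unfolding H_def
  proof -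
    have "summable (\<lambda>l. z (Suc l) * (N + \<bar>ln c\<bar> + \<bar>ln N\<bar>) + real (Suc l) * z (Suc l))"
      by (intro summable_add summable_mult2 zf(4) zf(3))
    then show "summable (\<lambda>l. z (Suc l) * (N + \<bar>ln c\<bar> + real (Suc l) + \<bar>ln N\<bar>))" by (simp add: algebra_simps)
  qed
  have "summable (\<lambda>l. T l - G l)"
    by (rule summable_comparison_test'[OF summable_diff[OF Hs Gs], of 0]) (use GT TH in auto)
  from summable_add[OF this Gs] have Ts: "summable T" by simp
  have "suminf G \<le> suminf T" by (rule suminf_le[OF GT Gs Ts])
  moreover have "At q R z = suminf T" using nz unfolding At_def T_def N_def by (simp only: if_False)
  moreover have "suminf G = N - N * (\<Sum>l. qt q R (Suc l) * exp (- t * real (Suc l))) - t * rho z"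
  proof -
    have a: "summable (\<lambda>l. z (Suc l))" by (rule zf(4))
    have b: "summable (\<lambda>l. N * (qt q R (Suc l) * exp (- t * real (Suc l))))" by (intro summable_mult Fs)
    have cc: "summable (\<lambda>l. t * (real (Suc l) * z (Suc l)))" by (intro summable_mult zf(3))
    have "suminf G = suminf (\<lambda>l. z (Suc l) - N * (qt q R (Suc l) * exp (- t * real (Suc l)))) - suminf (\<lambda>l. t * (real (Suc l) * z (Suc l)))"
      unfolding G_def by (rule suminf_diff[OF summable_diff[OF a b] cc, symmetric])
    also have "\<dots> = (suminf (\<lambda>l. z (Suc l)) - suminf (\<lambda>l. N * (qt q R (Suc l) * exp (- t * real (Suc l))))) - suminf (\<lambda>l. t * (real (Suc l) * z (Suc l)))"
      by (subst suminf_diff[OF a b, symmetric]) simp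
    also have "\<dots> = N - N * (\<Sum>l. qt q R (Suc l) * exp (- t * real (Suc l))) - t * rho z"
      unfolding suminf_mult[OF Fs, of N] suminf_mult[OF zf(3), of t] zf(5) by (simp add: N_def Nz_def)
    finally show ?thesis .
  qed
  ultimately show ?thesis by (simp add: N_def algebra_simps)
qed


lemma inf_small:
  assumes qpos: "\<forall>l\<ge>1. q l > 0" and Rlim: "(\<lambda>l. q l / q (Suc l)) \<longlonglongrightarrow> R" and Rpos: "0 < R"
    and rp: "\<rho>s > 0" and e: "e > 0"
  shows "\<exists>z\<in>X0plus. rho z = \<rho>s \<and> At q R z \<le> e"
proof -
  define d where "d = e / (2 * \<rho>s)"
  have d: "d > 0" using e rp by (simp add: d_def)
  obtain c where c: "c > 0" "\<And>l. l \<ge> 1 \<Longrightarrow> qt q R l \<ge> c * exp (- d * real l)"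
    using qt_low[OF qpos Rlim Rpos d] by auto
  define L where "L = nat \<lceil>2 * \<rho>s * \<bar>ln c\<bar> / e\<rceil> + 1"
  have L1: "L \<ge> 1" by (simp add: L_def)
  have Lbig: "2 * \<rho>s * \<bar>ln c\<bar> / e \<le> real L" unfolding L_def
    using real_nat_ceiling_ge[of "2 * \<rho>s * \<bar>ln c\<bar> / e"] by simp
  define z where "z l = (if l = L then \<rho>s / real L else 0)" for l
  obtain k where k: "L = Suc k" using L1 by (cases L) auto
  have e1: "(\<lambda>l. real l * z l) = (\<lambda>l. if l = L then \<rho>s else 0)" using L1 by (auto simp: z_def)
  have rz: "(\<lambda>l. real l * z l) sums \<rho>s" unfolding e1 using sums_single[of L "\<lambda>_. \<rho>s"] by simp
  have zX: "z \<in> X0plus" unfolding X0plus_def using L1 rp rz by (auto simp: z_def sums_summable)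
  have rho: "rho z = \<rho>s" unfolding rho_def using rz by (rule sums_unique[symmetric])
  have e2: "(\<lambda>l. z (Suc l)) = (\<lambda>l. if l = k then \<rho>s / real L else 0)" by (auto simp: z_def k)
  have N: "Nz z = \<rho>s / real L" unfolding Nz_def e2 using sums_single[of k "\<lambda>_. \<rho>s / real L"] sums_unique by fastforce
  have nz: "\<not> (\<forall>l\<ge>1. z l = 0)" using L1 rp by (auto simp: z_def intro!: exI[of _ L])
  define v where "v = \<rho>s / real L * ln (\<rho>s / real L / (qt q R L * (\<rho>s / real L)))"
  have e3: "(\<lambda>l. z (Suc l) * ln (z (Suc l) / (qt q R (Suc l) * Nz z))) = (\<lambda>l. if l = k then v else 0)"
    by (auto simp: z_def k N v_def)
  have At: "At q R z = v" unfolding At_def e3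
  proof -
    have "(\<Sum>l. if l = k then v else 0) = v" using sums_single[of k "\<lambda>_. v"] sums_unique by fastforce
    then show "(if \<forall>l\<ge>1. z l = 0 then 0 else \<Sum>l. if l = k then v else 0) = v" using nz by (simp only: if_False)
  qed
  have qL: "qt q R L > 0" using qt_pos[OF qpos Rpos L1] .
  have v: "v = - (\<rho>s / real L) * ln (qt q R L)" using qL rp L1 by (simp add: v_def ln_div)
  have "ln (c * exp (- d * real L)) \<le> ln (qt q R L)" using c(1) c(2)[OF L1] qL by (subst ln_le_cancel_iff) auto
  then have "- ln (qt q R L) \<le> \<bar>ln c\<bar> + d * real L" using c(1) by (simp add: ln_mult)
  then have "(\<rho>s / real L) * (- ln (qt q R L)) \<le> (\<rho>s / real L) * (\<bar>ln c\<bar> + d * real L)"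
    using rp L1 by (intro mult_left_mono) auto
  then have "v \<le> (\<rho>s / real L) * (\<bar>ln c\<bar> + d * real L)" unfolding v by simp
  also have "\<dots> = \<rho>s * \<bar>ln c\<bar> / real L + e / 2" using L1 rp by (simp add: d_def field_simps)
  also have "\<rho>s * \<bar>ln c\<bar> / real L \<le> e / 2" using Lbig L1 e by (simp add: field_simps)
  finally have "v \<le> e" by simp
  then show ?thesis using zX rho At by blast
qed


theorem corollary14:
  fixes q :: "nat \<Rightarrow> real" and R \<rho>s :: real and zs :: "nat \<Rightarrow> nat \<Rightarrow> real"
  assumes qpos: "\<forall>l\<ge>1. q l > 0"
    and q1: "q 1 = 1"
    and Rlim: "(\<lambda>l. q l / q (Suc l)) \<longlonglongrightarrow> R"
    and Rpos: "0 < R"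
    and NEQ: "ft1 q R < 1 \<or> (ft1 q R = 1 \<and> gt1 q R = \<infinity>)"
    and rhopos: "\<rho>s > 0"
    and zsX: "\<forall>m. zs m \<in> X0plus \<and> rho (zs m) = \<rho>s"
    and minimizing: "(\<lambda>m. ereal (At q R (zs m))) \<longlonglongrightarrow>
                       (INF z\<in>{z\<in>X0plus. rho z = \<rho>s}. ereal (At q R z))"
  shows "\<forall>l\<ge>1. (\<lambda>m. zs m l) \<longlonglongrightarrow> 0"
proof (intro allI impI)
  fix l :: nat assume l1: "l \<ge> 1"
  then obtain k where k: "l = Suc k" by (cases l) auto
  have nn: "\<And>m. 0 \<le> zs m l" using zsX X0_facts(1) by blast
  show "(\<lambda>m. zs m l) \<longlonglongrightarrow> 0"
  proof (rule order_tendstoI)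
    fix a :: real assume "a < 0" then show "eventually (\<lambda>m. a < zs m l) sequentially"
      using nn by (intro always_eventually allI) (auto intro: less_le_trans)
  next
    fix a :: real assume a: "0 < a"
    define M where "M = 2 * \<rho>s / a"
    have M: "M > 0" using a rhopos by (simp add: M_def)
    obtain t where t: "t > 0" "M * t \<le> 1 - (\<Sum>l. qt q R (Suc l) * exp (- t * real (Suc l)))"
      using F_gap[OF qpos Rlim Rpos NEQ M] by blast
    define F where "F = (\<Sum>l. qt q R (Suc l) * exp (- t * real (Suc l)))"
    have tr: "t * \<rho>s / 2 > 0" using t rhopos by simp
    obtain z where z: "z \<in> X0plus" "rho z = \<rho>s" "At q R z \<le> t * \<rho>s / 2"
      using inf_small[OF qpos Rlim Rpos rhopos tr] by blast
    have "(INF z\<in>{z\<in>X0plus. rho z = \<rho>s}. ereal (At q R z)) \<le> ereal (At q R z)"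
      using z by (intro INF_lower) auto
    also have "\<dots> < ereal (t * \<rho>s)" using z tr by simp
    finally have "eventually (\<lambda>m. ereal (At q R (zs m)) < ereal (t * \<rho>s)) sequentially"
      by (rule order_tendstoD(2)[OF minimizing])
    then show "eventually (\<lambda>m. zs m l < a) sequentially"
    proof eventually_elim
      case (elim m)
      then have At: "At q R (zs m) < t * \<rho>s" by simp
      have zm: "zs m \<in> X0plus" "rho (zs m) = \<rho>s" using zsX by auto
      note zf = X0_facts[OF zm(1)]
      have nz: "\<not> (\<forall>l\<ge>1. zs m l = 0)"
      proof
        assume h: "\<forall>l\<ge>1. zs m l = 0"
        have "(\<lambda>l. real l * zs m l) = (\<lambda>_. 0)"
        proof
          fix j show "real j * zs m j = 0" using h zf(2) by (cases j) auto
        qed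
        then have "rho (zs m) = 0" by (simp add: rho_def)
        then show False using zm rhopos by simp
      qed
      have low: "Nz (zs m) * (1 - F) - t * rho (zs m) \<le> At q R (zs m)"
        unfolding F_def by (rule At_lower[OF qpos Rlim Rpos zm(1) nz t(1)])
      have "Nz (zs m) * (M * t) \<le> Nz (zs m) * (1 - F)"
        using t(2) zf(7) unfolding F_def by (intro mult_left_mono) auto
      then have "Nz (zs m) * (M * t) < 2 * (t * \<rho>s)" using low[unfolded zm(2)] At by linarith
      then have "Nz (zs m) * M < 2 * \<rho>s" using t(1) by (simp add: field_simps)
      then have "Nz (zs m) < a" using a M rhopos by (simp add: M_def field_simps)
      then show ?case using zf(6)[of k] k by simp
    qed
  qed
qed

end
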